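(* Let $|q|<1$ and let $x,y$ be complex numbers. Then $$\sum_{k=0}^\infty\frac{(-1)^k y^k q^{\binom{k}{2}}}{(q;q)_k}\sum_{n=k}^\infty\sum_{m=k}^\infty h_{n+m-k}(x,y|q)\frac{t^n}{(q;q)_{n-k}}\frac{s^m}{(q;q)_{m-k}}=(xst;q)_\infty\sum_{n=0}^\infty\sum_{m=0}^\infty h_n(x,y|q)\,h_m(x,y|q)\frac{t^n}{(q;q)_n}\frac{s^m}{(q;q)_m}.$$
   Context: Throughout $|q|<1$. $(a;q)_n=\prod_{j=0}^{n-1}(1-aq^j)$, $(a;q)_\infty=\prod_{j\ge0}(1-aq^j)$, ${n\brack k}=\frac{(q;q)_n}{(q;q)_k(q;q)_{n-k}}$. $P_n(x,y)=(x-y)(x-qy)\cdots(x-q^{n-1}y)$ with $P_0=1$, and $h_n(x,y|q)=\sum_{k=0}^n{n\brack k}P_k(x,y)$. *)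

theory Defs
  imports "HOL-Analysis.Analysis"
begin

definition qpoch :: "complex \<Rightarrow> complex \<Rightarrow> nat \<Rightarrow> complex" where
  "qpoch a q n = (\<Prod>j<n. 1 - a * q ^ j)"

definition qpoch_inf :: "complex \<Rightarrow> complex \<Rightarrow> complex" where
  "qpoch_inf a q = (\<Prod>j. 1 - a * q ^ j)"

text \<open>Gaussian binomial coefficient [n k] (used for k \<le> n)\<close>
definition qbinom :: "complex \<Rightarrow> nat \<Rightarrow> nat \<Rightarrow> complex" where
  "qbinom q n k = qpoch q q n / (qpoch q q k * qpoch q q (n - k))"

definition Pq :: "complex \<Rightarrow> nat \<Rightarrow> complex \<Rightarrow> complex \<Rightarrow> complex" where
  "Pq q n x y = (\<Prod>j<n. x - q ^ j * y)"

definition hq :: "complex \<Rightarrow> nat \<Rightarrow> complex \<Rightarrow> complex \<Rightarrow> complex" where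
  "hq q n x y = (\<Sum>k\<le>n. qbinom q n k * Pq q k x y)"

end

theory Submission
  imports Defs "HOL-Computational_Algebra.Formal_Power_Series"
begin

unbundle no vec_syntax
notation fps_nth (infixl "$" 75)



lemma qpoch_0[simp]: "qpoch a q 0 = 1" by (simp add: qpoch_def)
lemma qpoch_Suc: "qpoch q q (Suc n) = qpoch q q n * (1 - q ^ Suc n)"
  by (simp add: qpoch_def)

lemma pow_ne_1: assumes "norm (q::complex) < 1" shows "q ^ Suc n \<noteq> 1"
proof
  assume "q ^ Suc n = 1"
  then have "norm q ^ Suc n = 1" by (metis norm_one norm_power)
  moreover have "norm q ^ n \<le> 1" using assms by (simp add: power_le_one)
  then have "norm q * norm q ^ n \<le> norm q * 1" by (intro mult_left_mono) auto
  then have "norm q ^ Suc n < 1" using assms by simp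
  ultimately show False by simp
qed

lemma qpoch_nz: assumes "norm (q::complex) < 1" shows "qpoch q q n \<noteq> 0"
proof -
  have "1 - q * q ^ j \<noteq> 0" for j using pow_ne_1[OF assms, of j] by simp
  then show ?thesis unfolding qpoch_def by (simp add: prod_zero_iff)
qed

lemma Pq_0[simp]: "Pq q 0 x y = 1" by (simp add: Pq_def)
lemma Pq_Suc: "Pq q (Suc k) x y = Pq q k x y * (x - q ^ k * y)"
  by (simp add: Pq_def)

lemma qbinom_0: assumes "norm q < 1" shows "qbinom q n 0 = 1"
  using qpoch_nz[OF assms, of n] by (simp add: qbinom_def)
lemma qbinom_n_n: assumes "norm q < 1" shows "qbinom q n n = 1"
proof -
  have "qpoch q q n \<noteq> 0" using qpoch_nz[OF assms, of n] by simp
  then show ?thesis by (simp add: qbinom_def)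
qed

lemma frac_id: fixes A B C a c Q :: complex
  assumes "B \<noteq> 0" "a \<noteq> 0" "C \<noteq> 0" "c \<noteq> 0"
  shows "A / (B * a * C) + Q * (A / (B * C * c)) = A * (c + Q * a) / (B * a * (C * c))"
  using assms by (simp add: field_simps)

lemma qbinom_pascal:
  assumes q: "norm q < 1" and j: "1 \<le> j" "j \<le> r"
  shows "qbinom q (Suc r) j = qbinom q r j + q ^ (Suc r - j) * qbinom q r (j - 1)"
proof -
  define i d where "i = j - 1" and "d = r - j"
  then have jd: "j = Suc i" "r = i + Suc d" using j by auto
  have e1: "Suc r - Suc i = Suc d" "r - Suc i = d" "r - i = Suc d" "Suc i - 1 = i" using jd by auto
  have nz: "qpoch q q r \<noteq> 0" "qpoch q q i \<noteq> 0" "qpoch q q d \<noteq> 0" using qpoch_nz[OF q] by auto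
  have nz2: "1 - q ^ Suc i \<noteq> 0" "1 - q ^ Suc d \<noteq> 0" using pow_ne_1[OF q] by auto
  have key: "1 - q ^ Suc r = (1 - q ^ Suc d) + q ^ Suc d * (1 - q ^ Suc i)"
    using jd by (simp add: algebra_simps power_add[symmetric])
  have "qbinom q r j + q ^ (Suc r - j) * qbinom q r (j - 1)
     = qpoch q q r / (qpoch q q i * (1 - q ^ Suc i) * qpoch q q d)
       + q ^ Suc d * (qpoch q q r / (qpoch q q i * qpoch q q d * (1 - q ^ Suc d)))"
    unfolding qbinom_def jd(1) e1 qpoch_Suc by simp
  also have "\<dots> = qpoch q q r * ((1 - q ^ Suc d) + q ^ Suc d * (1 - q ^ Suc i))
      / (qpoch q q i * (1 - q ^ Suc i) * (qpoch q q d * (1 - q ^ Suc d)))"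
    by (rule frac_id) (use nz nz2 in auto)
  also have "\<dots> = qbinom q (Suc r) j"
    unfolding qbinom_def jd(1) e1 qpoch_Suc key[symmetric] by simp
  finally show ?thesis ..
qed

definition sc :: "complex \<Rightarrow> complex fps \<Rightarrow> complex fps" where
  "sc q F = Abs_fps (\<lambda>n. q ^ n * F $ n)"

lemma sc_nth[simp]: "sc q F $ n = q ^ n * F $ n" by (simp add: sc_def)

lemma sc_mult: "sc q (F * G) = sc q F * sc q G"
proof (rule fps_ext)
  fix n
  have "sc q (F * G) $ n = (\<Sum>i = 0..n. q ^ n * (F $ i * G $ (n - i)))"
    by (simp add: fps_mult_nth sum_distrib_left)
  also have "\<dots> = (\<Sum>i = 0..n. (q ^ i * F $ i) * (q ^ (n - i) * G $ (n - i)))"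
  proof (rule sum.cong)
    fix i assume "i \<in> {0..n}"
    then have "q ^ n = q ^ i * q ^ (n - i)" by (simp add: power_add[symmetric])
    then show "q ^ n * (F $ i * G $ (n - i)) = (q ^ i * F $ i) * (q ^ (n - i) * G $ (n - i))"
      by (simp add: algebra_simps)
  qed simp
  finally show "sc q (F * G) $ n = (sc q F * sc q G) $ n" by (simp add: fps_mult_nth)
qed

lemma sc_add: "sc q (F + G) = sc q F + sc q G" by (rule fps_ext) (simp add: algebra_simps)
lemma sc_diff: "sc q (F - G) = sc q F - sc q G" by (rule fps_ext) (simp add: algebra_simps)
lemma sc_const: "sc q (fps_const c) = fps_const c"
  by (rule fps_ext) simp
lemma sc_one: "sc q 1 = 1"
  by (rule fps_ext) simp
lemma sc_X: "sc q fps_X = fps_const q * fps_X"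
  by (rule fps_ext) (simp add: fps_X_def)
lemma sc_cmult: "sc q (fps_const c * F) = fps_const c * sc q F"
  by (simp add: sc_mult sc_const)
lemma sc_zero: "sc q 0 = 0" by (rule fps_ext) simp
lemma sc_sum: "sc q (\<Sum>i\<in>A. F i) = (\<Sum>i\<in>A. sc q (F i))"
  by (induction A rule: infinite_finite_induct) (auto simp: sc_add sc_zero)

definition lin :: "complex \<Rightarrow> complex fps" where
  "lin c = 1 - fps_const c * fps_X"

lemma sc_lin: "sc q (lin c) = lin (c * q)"
  by (simp add: lin_def sc_diff sc_one sc_mult sc_const sc_X mult.assoc[symmetric])

lemma lin_mult: "lin c * F = F - fps_const c * (fps_X * F)"
  by (simp add: lin_def algebra_simps)
lemma lin_mult_nth: "(lin c * F) $ n = F $ n - (if n = 0 then 0 else c * F $ (n - 1))"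
  unfolding lin_mult by (simp add: fps_X_mult_nth)



lemma choose2_Suc: "Suc i choose 2 = (i choose 2) + i"
  by (simp add: numeral_2_eq_2)

definition pp :: "complex \<Rightarrow> complex \<Rightarrow> nat \<Rightarrow> complex fps" where
  "pp q z r = (\<Prod>j<r. lin (z * q ^ j))"

lemma pp_0[simp]: "pp q z 0 = 1" by (simp add: pp_def)
lemma pp_Suc: "pp q z (Suc r) = pp q z r * lin (z * q ^ r)"
  by (simp add: pp_def)

lemma pp_Suc': "pp q z (Suc r) = lin z * sc q (pp q z r)"
proof (induction r)
  case 0
  then show ?case by (simp add: pp_Suc sc_one)
next
  case (Suc r)
  have "pp q z (Suc (Suc r)) = lin z * sc q (pp q z r) * lin (z * q ^ Suc r)"
    using Suc by (simp add: pp_Suc[of q z "Suc r"])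
  also have "\<dots> = lin z * sc q (pp q z (Suc r))"
    by (simp add: pp_Suc[of q z r] sc_mult sc_lin mult.assoc) (simp add: mult.commute)
  finally show ?case .
qed

lemma pp_nth:
  assumes q: "norm q < 1"
  shows "pp q z r $ j = (if j \<le> r then qbinom q r j * (-z) ^ j * q ^ (j choose 2) else 0)"
proof (induction r arbitrary: j)
  case 0
  then show ?case by (simp add: qbinom_0[OF q] binomial_eq_0)
next
  case (Suc r)
  have e: "pp q z (Suc r) $ j = pp q z r $ j - (if j = 0 then 0 else z * q ^ r * pp q z r $ (j - 1))"
    by (simp add: pp_Suc mult.commute[of "pp q z r"] lin_mult_nth)
  show ?case
  proof (cases j)
    case 0
    then show ?thesis using e Suc by (simp add: qbinom_0[OF q])
  next
    case (Suc i)
    note j = Suc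
    show ?thesis
    proof (cases "Suc i \<le> r")
      case True
      have "qbinom q (Suc r) (Suc i) = qbinom q r (Suc i) + q ^ (r - i) * qbinom q r i"
        using qbinom_pascal[OF q, of "Suc i" r] True by simp
      moreover have "q ^ r * q ^ (i choose 2) = q ^ (r - i) * q ^ (Suc i choose 2)"
        using True by (simp add: choose2_Suc power_add[symmetric])
      ultimately show ?thesis using e Suc.IH True j
        by (simp add: algebra_simps)
    next
      case False
      show ?thesis
      proof (cases "i = r")
        case True
        have "q ^ r * q ^ (r choose 2) = q ^ (Suc r choose 2)"
          by (simp add: choose2_Suc power_add[symmetric] add.commute)
        then show ?thesis using e Suc.IH True j qbinom_n_n[OF q, of "Suc r"] qbinom_n_n[OF q, of r]
          by (simp add: algebra_simps)
      next
        case False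
        then show ?thesis using e Suc.IH \<open>\<not> Suc i \<le> r\<close> j by simp
      qed
    qed
  qed
qed



definition Uf :: "complex \<Rightarrow> complex fps" where
  "Uf q = Abs_fps (\<lambda>n. 1 / qpoch q q n)"
definition Pf :: "complex \<Rightarrow> complex \<Rightarrow> complex \<Rightarrow> complex fps" where
  "Pf q x y = Abs_fps (\<lambda>n. Pq q n x y / qpoch q q n)"
definition Am :: "complex \<Rightarrow> complex \<Rightarrow> complex \<Rightarrow> nat \<Rightarrow> complex fps" where
  "Am q x y m = Abs_fps (\<lambda>n. hq q (n + m) x y / qpoch q q n)"
definition Wf :: "complex \<Rightarrow> complex \<Rightarrow> complex \<Rightarrow> nat \<Rightarrow> complex fps" where
  "Wf q x y m = (\<Sum>i\<le>m. fps_const (qbinom q m i * Pq q i x y) * pp q x (m - i))"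

lemma lin_nth0[simp]: "lin c $ 0 = 1" by (simp add: lin_def)

lemma aux_frac1: fixes A b h :: complex
  shows "A \<noteq> 0 \<Longrightarrow> b \<noteq> 0 \<Longrightarrow> h / (A * b) - (1 - b) * (h / (A * b)) = h / A"
  by (simp add: field_simps)
lemma aux_frac2: fixes A b :: complex
  shows "A \<noteq> 0 \<Longrightarrow> b \<noteq> 0 \<Longrightarrow> (1 - b) * (1 / (A * b)) = 1 / (A * b) - 1 / A"
  by (simp add: field_simps)
lemma aux_frac3: fixes A b P x y c :: complex
  shows "A \<noteq> 0 \<Longrightarrow> b \<noteq> 0 \<Longrightarrow>
    (1 - b) * (P * (x - c * y) / (A * b)) - y * (c * (P / A)) = P * (x - c * y) / (A * b) - x * (P / A)"
  by (simp add: field_simps)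

context
  fixes q x y :: complex
  assumes q: "norm q < 1"
begin

lemma qp_nz[simp]: "qpoch q q n \<noteq> 0" using qpoch_nz[OF q] .
lemma pw_nz[simp]: "1 - q ^ Suc n \<noteq> 0" using pow_ne_1[OF q, of n] by simp
lemma pw_nz'[simp]: "1 - q * q ^ n \<noteq> 0" using pow_ne_1[OF q, of n] by simp
lemma pw_nz''[simp]: "q * q ^ n \<noteq> 1" using pow_ne_1[OF q, of n] by simp

lemma Hh_eq: "Am q x y 0 = Pf q x y * Uf q"
proof (rule fps_ext)
  fix n
  have "(Pf q x y * Uf q) $ n = (\<Sum>i\<le>n. Pq q i x y / qpoch q q i * (1 / qpoch q q (n - i)))"
    by (simp add: fps_mult_nth Pf_def Uf_def atLeast0AtMost)
  also have "\<dots> = (\<Sum>i\<le>n. qbinom q n i * Pq q i x y) / qpoch q q n"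
    unfolding sum_divide_distrib
    by (rule sum.cong) (auto simp: qbinom_def)
  finally show "Am q x y 0 $ n = (Pf q x y * Uf q) $ n"
    by (simp add: Am_def hq_def)
qed

lemma Uf_sc: "sc q (Uf q) = lin 1 * Uf q"
proof (rule fps_ext)
  fix n
  show "sc q (Uf q) $ n = (lin 1 * Uf q) $ n"
  proof (cases n)
    case 0 then show ?thesis by (simp add: lin_mult_nth Uf_def)
  next
    case (Suc k)
    have "q ^ Suc k * (1 / (qpoch q q k * (1 - q ^ Suc k))) =
          1 / (qpoch q q k * (1 - q ^ Suc k)) - 1 / qpoch q q k"
      using aux_frac2[of "qpoch q q k" "1 - q ^ Suc k"] by simp
    then show ?thesis using Suc
      by (simp add: lin_mult_nth Uf_def qpoch_Suc del: power_Suc)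
  qed
qed

lemma Pf_sc: "lin y * sc q (Pf q x y) = lin x * Pf q x y"
proof (rule fps_ext)
  fix n
  show "(lin y * sc q (Pf q x y)) $ n = (lin x * Pf q x y) $ n"
  proof (cases n)
    case 0 then show ?thesis by (simp add: lin_mult_nth Pf_def)
  next
    case (Suc k)
    have "q ^ Suc k * (Pq q k x y * (x - q ^ k * y) / (qpoch q q k * (1 - q ^ Suc k))) - y * (q ^ k * (Pq q k x y / qpoch q q k))
       = Pq q k x y * (x - q ^ k * y) / (qpoch q q k * (1 - q ^ Suc k)) - x * (Pq q k x y / qpoch q q k)"
      using aux_frac3[of "qpoch q q k" "1 - q ^ Suc k" "Pq q k x y" x "q ^ k" y] by simp
    then show ?thesis using Suc
      by (simp add: lin_mult_nth Pf_def qpoch_Suc Pq_Suc del: power_Suc)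
  qed
qed

lemma Hh_sc: "lin y * sc q (Am q x y 0) = lin 1 * lin x * Am q x y 0"
proof -
  have "lin y * sc q (Am q x y 0) = (lin y * sc q (Pf q x y)) * sc q (Uf q)"
    by (simp add: Hh_eq sc_mult mult.assoc)
  also have "\<dots> = lin 1 * lin x * Am q x y 0"
    by (simp add: Pf_sc Uf_sc Hh_eq ac_simps)
  finally show ?thesis .
qed

lemma Am_shift: "fps_X * Am q x y (Suc m) = Am q x y m - sc q (Am q x y m)"
proof (rule fps_ext)
  fix n
  show "(fps_X * Am q x y (Suc m)) $ n = (Am q x y m - sc q (Am q x y m)) $ n"
  proof (cases n)
    case 0 then show ?thesis by (simp add: fps_X_mult_nth Am_def)
  next
    case (Suc k)
    have "hq q (Suc k + m) x y / qpoch q q (Suc k) - q ^ Suc k * (hq q (Suc k + m) x y / qpoch q q (Suc k))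
       = hq q (Suc k + m) x y / qpoch q q k"
      unfolding qpoch_Suc using aux_frac1[of "qpoch q q k" "1 - q ^ Suc k"] by simp
    then show ?thesis using Suc
      by (simp add: fps_X_mult_nth Am_def del: power_Suc)
  qed
qed

end



lemma lin_comb: "lin a * R - lin 1 * (R * lin b) = fps_X * (R * lin b + fps_const (b - a) * R)"
proof -
  have e: "fps_const (b - a) = fps_const b - fps_const a" by simp
  show ?thesis unfolding e lin_def by (simp add: algebra_simps del: fps_const_sub)
qed

lemma fc_add: "fps_const (a + b) = fps_const a + fps_const (b::'a::monoid_add)" by simp

context
  fixes q x y :: complex
  assumes q: "norm q < 1"
begin

lemma qbinom_pascal_ext:
  assumes "i \<le> Suc m"
  shows "qbinom q (Suc m) i = (if i \<le> m then qbinom q m i else 0) +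
           (if 1 \<le> i then q ^ (Suc m - i) * qbinom q m (i - 1) else 0)"
proof -
  consider "i = 0" | "1 \<le> i" "i \<le> m" | "i = Suc m" using assms by linarith
  then show ?thesis
  proof cases
    case 1 then show ?thesis by (simp add: qbinom_0[OF q])
  next
    case 2 then show ?thesis using qbinom_pascal[OF q, of i m] by simp
  next
    case 3 then show ?thesis using qbinom_n_n[OF q] by simp
  qed
qed

lemma Wf_rec: "fps_X * Wf q x y (Suc m) = lin (y * q ^ m) * Wf q x y m - lin 1 * (lin x * sc q (Wf q x y m))"
proof -
  define c where "c i = fps_const (qbinom q m i * Pq q i x y)" for i
  define d where "d i = fps_const (q ^ (m - i) * (x - q ^ i * y))" for i
  have S1: "lin x * sc q (Wf q x y m) = (\<Sum>i\<le>m. c i * pp q x (Suc (m - i)))"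
    unfolding Wf_def c_def sc_sum sum_distrib_left
    by (rule sum.cong) (simp_all add: sc_mult sc_const pp_Suc' ac_simps)
  have S2: "lin (y * q ^ m) * pp q x (m - i) - lin 1 * pp q x (Suc (m - i))
      = fps_X * (pp q x (Suc (m - i)) + d i * pp q x (m - i))" if "i \<le> m" for i
  proof -
    have "q ^ (m - i) * q ^ i = q ^ m" using that by (simp add: power_add[symmetric])
    then have "d i = fps_const (x * q ^ (m - i) - y * q ^ m)"
      unfolding d_def by (simp add: algebra_simps)
    then show ?thesis
      using lin_comb[of "y * q ^ m" "pp q x (m - i)" "x * q ^ (m - i)"]
      by (simp add: pp_Suc)
  qed
  have S3: "lin (y * q ^ m) * Wf q x y m - lin 1 * (lin x * sc q (Wf q x y m))
      = fps_X * ((\<Sum>i\<le>m. c i * pp q x (Suc (m - i))) + (\<Sum>i\<le>m. c i * d i * pp q x (m - i)))"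
  proof -
    have "lin (y * q ^ m) * Wf q x y m - lin 1 * (lin x * sc q (Wf q x y m))
        = (\<Sum>i\<le>m. c i * (lin (y * q ^ m) * pp q x (m - i) - lin 1 * pp q x (Suc (m - i))))"
      unfolding S1 unfolding Wf_def c_def sum_distrib_left sum_subtractf[symmetric]
      by (rule sum.cong) (simp_all add: algebra_simps)
    also have "\<dots> = (\<Sum>i\<le>m. fps_X * (c i * pp q x (Suc (m - i)) + c i * d i * pp q x (m - i)))"
      by (rule sum.cong) (simp_all add: S2 algebra_simps)
    finally show ?thesis by (simp only: sum.distrib[symmetric] sum_distrib_left)
  qed
  have S4: "Wf q x y (Suc m) = (\<Sum>i\<le>m. c i * pp q x (Suc (m - i))) + (\<Sum>i\<le>m. c i * d i * pp q x (m - i))"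
  proof -
    have "Wf q x y (Suc m) = (\<Sum>i\<le>Suc m.
        (if i \<le> m then fps_const (qbinom q m i * Pq q i x y) * pp q x (Suc m - i) else 0) +
        (if 1 \<le> i then fps_const (q ^ (Suc m - i) * qbinom q m (i - 1) * Pq q i x y) * pp q x (Suc m - i) else 0))"
      unfolding Wf_def
      by (rule sum.cong) (simp_all add: qbinom_pascal_ext algebra_simps fc_add del: fps_const_add)
    also have "\<dots> = (\<Sum>i\<le>Suc m. (if i \<le> m then fps_const (qbinom q m i * Pq q i x y) * pp q x (Suc m - i) else 0)) +
        (\<Sum>i\<le>Suc m. (if 1 \<le> i then fps_const (q ^ (Suc m - i) * qbinom q m (i - 1) * Pq q i x y) * pp q x (Suc m - i) else 0))"
      by (rule sum.distrib)
    also have "(\<Sum>i\<le>Suc m. (if i \<le> m then fps_const (qbinom q m i * Pq q i x y) * pp q x (Suc m - i) else 0))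
        = (\<Sum>i\<le>m. c i * pp q x (Suc (m - i)))"
      unfolding c_def by (simp add: Suc_diff_le)
    also have "(\<Sum>i\<le>Suc m. (if 1 \<le> i then fps_const (q ^ (Suc m - i) * qbinom q m (i - 1) * Pq q i x y) * pp q x (Suc m - i) else 0))
        = (\<Sum>i\<le>m. c i * d i * pp q x (m - i))"
      unfolding sum.atMost_Suc_shift c_def d_def
      by (simp add: Pq_Suc algebra_simps)
    finally show ?thesis .
  qed
  show ?thesis using S3 S4 by simp
qed

lemma main_fps: "pp q y m * Am q x y m = Am q x y 0 * Wf q x y m"
proof (induction m)
  case 0
  then show ?case by (simp add: Wf_def qbinom_0[OF q])
next
  case (Suc m)
  let ?H = "Am q x y 0"
  have "fps_X * (pp q y (Suc m) * Am q x y (Suc m)) = pp q y (Suc m) * (Am q x y m - sc q (Am q x y m))"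
    by (simp add: Am_shift[OF q, symmetric] ac_simps)
  also have "\<dots> = lin (y * q ^ m) * (pp q y m * Am q x y m) - lin y * sc q (pp q y m * Am q x y m)"
  proof -
    have e1: "pp q y (Suc m) * Am q x y m = lin (y * q ^ m) * (pp q y m * Am q x y m)"
      by (simp add: pp_Suc ac_simps)
    have e2: "pp q y (Suc m) * sc q (Am q x y m) = lin y * sc q (pp q y m * Am q x y m)"
      by (simp only: pp_Suc' sc_mult mult.assoc)
    show ?thesis by (simp add: right_diff_distrib e1 e2)
  qed
  also have "\<dots> = lin (y * q ^ m) * (?H * Wf q x y m) - (lin y * sc q ?H) * sc q (Wf q x y m)"
    by (simp add: Suc sc_mult ac_simps)
  also have "\<dots> = ?H * (lin (y * q ^ m) * Wf q x y m - lin 1 * (lin x * sc q (Wf q x y m)))"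
    by (simp add: Hh_sc[OF q] algebra_simps)
  also have "\<dots> = fps_X * (?H * Wf q x y (Suc m))"
    by (simp add: Wf_rec ac_simps)
  finally show ?case by simp
qed

end



definition al :: "complex \<Rightarrow> complex \<Rightarrow> nat \<Rightarrow> complex" where
  "al q z k = (-1) ^ k * z ^ k * q ^ (k choose 2) / qpoch q q k"

lemma sum_if_atLeast0: "(\<Sum>k=0..n. if k \<le> m then f k else 0) = (\<Sum>k\<le>min n m. f k)"
  for n m :: nat
proof -
  have "(\<Sum>k=0..n. if k \<le> m then f k else 0) = sum f {k\<in>{0..n}. k \<le> m}"
    by (subst sum.inter_filter) auto
  also have "{k\<in>{0..n}. k \<le> m} = {..min n m}" by auto
  finally show ?thesis .
qed

context
  fixes q x y :: complex
  assumes q: "norm q < 1"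
begin

lemma qp_nz2[simp]: "qpoch q q n \<noteq> 0" using qpoch_nz[OF q] .

lemma qbinom_prod:
  assumes "i + j \<le> m"
  shows "qbinom q m i * qbinom q (m - i) j = qbinom q m j * qbinom q (m - j) i"
proof -
  have e: "m - i - j = m - j - i" by simp
  show ?thesis unfolding qbinom_def e by (simp add: field_simps)
qed

lemma Wf_nth: "Wf q x y m $ j = (if j \<le> m then qbinom q m j * (-x) ^ j * q ^ (j choose 2) * hq q (m - j) x y else 0)"
proof -
  have "Wf q x y m $ j = (\<Sum>i\<le>m. qbinom q m i * Pq q i x y *
      (if j \<le> m - i then qbinom q (m - i) j * (-x) ^ j * q ^ (j choose 2) else 0))"
    unfolding Wf_def fps_sum_nth by (simp add: pp_nth[OF q])
  also have "\<dots> = (if j \<le> m then qbinom q m j * (-x) ^ j * q ^ (j choose 2) * hq q (m - j) x y else 0)"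
  proof (cases "j \<le> m")
    case False
    then show ?thesis by (auto intro!: sum.neutral)
  next
    case True
    have "(\<Sum>i\<le>m. qbinom q m i * Pq q i x y *
      (if j \<le> m - i then qbinom q (m - i) j * (-x) ^ j * q ^ (j choose 2) else 0))
      = (\<Sum>i\<le>m. if i \<in> {..m - j} then qbinom q m i * Pq q i x y * (qbinom q (m - i) j * (-x) ^ j * q ^ (j choose 2)) else 0)"
      using True by (intro sum.cong) auto
    also have "\<dots> = (\<Sum>i\<le>m - j. qbinom q m i * Pq q i x y * (qbinom q (m - i) j * (-x) ^ j * q ^ (j choose 2)))"
      by (subst sum.inter_restrict[symmetric]) (auto intro!: sum.cong)
    also have "\<dots> = (\<Sum>i\<le>m - j. qbinom q m j * (-x) ^ j * q ^ (j choose 2) * (qbinom q (m - j) i * Pq q i x y))"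
    proof (rule sum.cong)
      fix i assume "i \<in> {..m - j}"
      then have "i + j \<le> m" using True by auto
      from qbinom_prod[OF this] show "qbinom q m i * Pq q i x y * (qbinom q (m - i) j * (-x) ^ j * q ^ (j choose 2))
        = qbinom q m j * (-x) ^ j * q ^ (j choose 2) * (qbinom q (m - j) i * Pq q i x y)"
        by (simp add: algebra_simps)
    qed simp
    finally show ?thesis using True by (simp add: hq_def sum_distrib_left)
  qed
  finally show ?thesis .
qed

lemma fin_id:
  "(\<Sum>k\<le>min n m. al q y k * (hq q (n + m - k) x y / (qpoch q q (n - k) * qpoch q q (m - k))))
 = (\<Sum>k\<le>min n m. al q x k * (hq q (n - k) x y * hq q (m - k) x y / (qpoch q q (n - k) * qpoch q q (m - k))))"
proof -
  have al_eq: "al q z k * qpoch q q m / qpoch q q (m - k) = qbinom q m k * (-z) ^ k * q ^ (k choose 2)" if "k \<le> m" for z k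
    unfolding al_def qbinom_def by (simp add: field_simps power_minus')
  have "(pp q y m * Am q x y m) $ n = (Am q x y 0 * Wf q x y m) $ n"
    by (simp add: main_fps[OF q])
  moreover have "(pp q y m * Am q x y m) $ n = qpoch q q m *
     (\<Sum>k\<le>min n m. al q y k * (hq q (n + m - k) x y / (qpoch q q (n - k) * qpoch q q (m - k))))"
  proof -
    have "(pp q y m * Am q x y m) $ n = (\<Sum>k=0..n. if k \<le> m then
        qbinom q m k * (-y) ^ k * q ^ (k choose 2) * (hq q (n - k + m) x y / qpoch q q (n - k)) else 0)"
      unfolding fps_mult_nth by (rule sum.cong) (auto simp: pp_nth[OF q] Am_def)
    also have "\<dots> = (\<Sum>k\<le>min n m. qbinom q m k * (-y) ^ k * q ^ (k choose 2) * (hq q (n - k + m) x y / qpoch q q (n - k)))"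
      by (rule sum_if_atLeast0)
    also have "\<dots> = (\<Sum>k\<le>min n m. qpoch q q m * (al q y k * (hq q (n + m - k) x y / (qpoch q q (n - k) * qpoch q q (m - k)))))"
    proof (rule sum.cong)
      fix k assume k: "k \<in> {..min n m}"
      then have "n - k + m = n + m - k" by auto
      with al_eq[of k y] k show "qbinom q m k * (-y) ^ k * q ^ (k choose 2) * (hq q (n - k + m) x y / qpoch q q (n - k))
        = qpoch q q m * (al q y k * (hq q (n + m - k) x y / (qpoch q q (n - k) * qpoch q q (m - k))))"
        by (simp add: field_simps)
    qed simp
    finally show ?thesis by (simp add: sum_distrib_left)
  qed
  moreover have "(Am q x y 0 * Wf q x y m) $ n = qpoch q q m *
     (\<Sum>k\<le>min n m. al q x k * (hq q (n - k) x y * hq q (m - k) x y / (qpoch q q (n - k) * qpoch q q (m - k))))"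
  proof -
    have "(Am q x y 0 * Wf q x y m) $ n = (Wf q x y m * Am q x y 0) $ n" by (simp add: mult.commute)
    also have "\<dots> = (\<Sum>k=0..n. if k \<le> m then
        qbinom q m k * (-x) ^ k * q ^ (k choose 2) * hq q (m - k) x y * (hq q (n - k) x y / qpoch q q (n - k)) else 0)"
      unfolding fps_mult_nth by (rule sum.cong) (auto simp: Wf_nth Am_def)
    also have "\<dots> = (\<Sum>k\<le>min n m. qbinom q m k * (-x) ^ k * q ^ (k choose 2) * hq q (m - k) x y * (hq q (n - k) x y / qpoch q q (n - k)))"
      by (rule sum_if_atLeast0)
    also have "\<dots> = (\<Sum>k\<le>min n m. qpoch q q m * (al q x k * (hq q (n - k) x y * hq q (m - k) x y / (qpoch q q (n - k) * qpoch q q (m - k)))))"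
    proof (rule sum.cong)
      fix k assume k: "k \<in> {..min n m}"
      with al_eq[of k x] k show "qbinom q m k * (-x) ^ k * q ^ (k choose 2) * hq q (m - k) x y * (hq q (n - k) x y / qpoch q q (n - k))
        = qpoch q q m * (al q x k * (hq q (n - k) x y * hq q (m - k) x y / (qpoch q q (n - k) * qpoch q q (m - k))))"
        by (simp add: field_simps)
    qed simp
    finally show ?thesis by (simp add: sum_distrib_left)
  qed
  ultimately show ?thesis by simp
qed

end


lemma one_minus_ge_exp:
  fixes u r :: real
  assumes "0 \<le> u" "u \<le> r" "r < 1"
  shows "exp (- u / (1 - r)) \<le> 1 - u"
proof -
  have u1: "u < 1" using assms by simp
  have "1 + u / (1 - u) \<le> exp (u / (1 - u))" by (rule exp_ge_add_one_self)
  then have "1 / (1 - u) \<le> exp (u / (1 - u))" using u1 by (simp add: field_simps)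
  then have "exp (- (u / (1 - u))) \<le> 1 - u" using u1
    by (simp add: exp_minus field_simps)
  moreover have "u / (1 - u) \<le> u / (1 - r)" using assms
    by (intro divide_left_mono) auto
  ultimately show ?thesis
    by (smt (verit) exp_le_cancel_iff minus_divide_left)
qed

context
  fixes q :: complex
  assumes q: "norm q < 1"
begin

definition KK :: real where "KK = exp (norm q / (1 - norm q) ^ 2)"

lemma KK_pos: "KK > 0" by (simp add: KK_def)

lemma qp_lower: "norm (qpoch q q n) \<ge> exp (- norm q / (1 - norm q) ^ 2)"
proof -
  let ?r = "norm q"
  have r0: "0 \<le> ?r" "?r < 1" using q by auto
  have "norm (qpoch q q n) = (\<Prod>j<n. norm (1 - q * q ^ j))"
    by (simp add: qpoch_def prod_norm)
  also have "\<dots> \<ge> (\<Prod>j<n. exp (- (?r ^ Suc j) / (1 - ?r)))"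
  proof (rule prod_mono, safe)
    fix j
    show "0 \<le> exp (- (?r ^ Suc j) / (1 - ?r))" by simp
    have "?r ^ Suc j \<le> ?r" using r0 by (simp add: power_le_one mult_left_le)
    then have "exp (- (?r ^ Suc j) / (1 - ?r)) \<le> 1 - ?r ^ Suc j"
      using r0 by (intro one_minus_ge_exp) auto
    also have "1 - ?r ^ Suc j \<le> norm (1 - q * q ^ j)"
      using norm_triangle_ineq2[of 1 "q * q ^ j"] by (simp add: norm_mult norm_power)
    finally show "exp (- (?r ^ Suc j) / (1 - ?r)) \<le> norm (1 - q * q ^ j)" .
  qed
  finally have 1: "norm (qpoch q q n) \<ge> exp (\<Sum>j<n. - (?r ^ Suc j) / (1 - ?r))"
    by (simp add: exp_sum)
  have "(\<Sum>j<n. ?r ^ Suc j) = ?r * (\<Sum>j<n. ?r ^ j)" by (simp add: sum_distrib_left)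
  also have "(\<Sum>j<n. ?r ^ j) \<le> (\<Sum>j. ?r ^ j)"
    using r0 by (intro sum_le_suminf summable_geometric) auto
  also have "(\<Sum>j. ?r ^ j) = 1 / (1 - ?r)" using r0 by (simp add: suminf_geometric)
  finally have "(\<Sum>j<n. ?r ^ Suc j) \<le> ?r * (1 / (1 - ?r))" using r0 by (simp add: mult_left_mono)
  then have "(\<Sum>j<n. ?r ^ Suc j) / (1 - ?r) \<le> (?r * (1 / (1 - ?r))) / (1 - ?r)"
    using r0 by (intro divide_right_mono) auto
  also have "(?r * (1 / (1 - ?r))) / (1 - ?r) = ?r / (1 - ?r) ^ 2"
    by (simp add: power2_eq_square)
  finally have "(\<Sum>j<n. ?r ^ Suc j) / (1 - ?r) \<le> ?r / (1 - ?r) ^ 2" .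
  then have "- ?r / (1 - ?r) ^ 2 \<le> (\<Sum>j<n. - (?r ^ Suc j) / (1 - ?r))"
    by (simp add: sum_negf sum_divide_distrib[symmetric])
  with 1 show ?thesis by (meson exp_le_cancel_iff order_trans)
qed

lemma inv_qp_bound: "norm (1 / qpoch q q n) \<le> KK"
proof -
  have "exp (- norm q / (1 - norm q) ^ 2) > 0" by simp
  then have "1 / norm (qpoch q q n) \<le> 1 / exp (- norm q / (1 - norm q) ^ 2)"
    using qp_lower qpoch_nz[OF q, of n] by (intro divide_left_mono) auto
  then show ?thesis by (simp add: KK_def norm_divide exp_minus field_simps)
qed

lemma qchoose_bound: "norm (q ^ (k choose 2)) \<le> 1"
  using q by (simp add: norm_power power_le_one)

lemma al_bound: "norm (al q z k) \<le> KK * norm z ^ k"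
proof -
  have "norm (al q z k) = norm z ^ k * norm (q ^ (k choose 2)) * norm (1 / qpoch q q k)"
    by (simp add: al_def norm_mult norm_divide norm_power)
  also have "\<dots> \<le> norm z ^ k * 1 * KK"
    by (intro mult_mono qchoose_bound inv_qp_bound) auto
  finally show ?thesis by (simp add: mult.commute)
qed

end


lemma frac_rec: fixes A b w :: complex
  shows "A \<noteq> 0 \<Longrightarrow> b \<noteq> 0 \<Longrightarrow> - w / (A * b) = - w * (1 - b) / (A * b) - w / A"
  by (simp add: field_simps)

definition EE :: "complex \<Rightarrow> complex \<Rightarrow> complex" where "EE q z = (\<Sum>j. al q z j)"

context
  fixes q :: complex
  assumes q: "norm q < 1"
begin


lemma al_0[simp]: "al q z 0 = 1" by (simp add: al_def binomial_eq_0)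

lemma al_norm_summable: "norm z < 1 \<Longrightarrow> summable (\<lambda>j. norm (al q z j))"
  by (rule summable_comparison_test'[of "\<lambda>j. KK q * norm z ^ j" 0])
     (auto intro!: summable_mult summable_geometric simp: al_bound[OF q])

lemma al_summable: "norm z < 1 \<Longrightarrow> summable (al q z)"
  using al_norm_summable summable_norm_cancel by blast

lemma al_rec: "al q z (Suc j) = al q (q * z) (Suc j) - z * al q (q * z) j"
proof -
  define c where "c = (-1) ^ j * z ^ j * q ^ (j choose 2) * q ^ j"
  have nz: "qpoch q q j \<noteq> 0" "1 - q ^ Suc j \<noteq> 0" using qpoch_nz[OF q] pow_ne_1[OF q, of j] by auto
  have e1: "al q z (Suc j) = - (z * c) / (qpoch q q j * (1 - q ^ Suc j))"
    unfolding al_def c_def qpoch_Suc choose2_Suc by (simp add: power_add algebra_simps)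
  have e2: "al q (q * z) (Suc j) = - (z * c) * (1 - (1 - q ^ Suc j)) / (qpoch q q j * (1 - q ^ Suc j))"
    unfolding al_def c_def qpoch_Suc choose2_Suc by (simp add: power_add power_mult_distrib algebra_simps)
  have e3: "z * al q (q * z) j = (z * c) / qpoch q q j"
    unfolding al_def c_def by (simp add: power_mult_distrib algebra_simps)
  show ?thesis unfolding e1 e2 e3 by (rule frac_rec) (use nz in auto)
qed

lemma EE_fun:
  assumes z: "norm z < 1"
  shows "EE q z = (1 - z) * EE q (q * z)"
proof -
  have "norm q * norm z \<le> 1 * norm z" by (rule mult_right_mono) (use q in auto)
  then have qz: "norm (q * z) < 1" using z by (simp add: norm_mult)
  define g where "g j = (if j = 0 then 0 else z * al q (q * z) (j - 1))" for j
  have S1: "al q (q * z) sums EE q (q * z)" unfolding EE_def using al_summable[OF qz] by (rule summable_sums)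
  have "(\<lambda>j. g (Suc j)) = (\<lambda>j. z * al q (q * z) j)" by (simp add: g_def)
  then have "(\<lambda>j. g (Suc j)) sums (z * EE q (q * z))" using sums_mult[OF S1, of z] by simp
  then have "g sums (z * EE q (q * z) + g 0)" by (simp only: sums_Suc_iff)
  then have S2: "g sums (z * EE q (q * z))" by (simp add: g_def)
  have "(\<lambda>j. al q (q * z) j - g j) sums (EE q (q * z) - z * EE q (q * z))" by (rule sums_diff[OF S1 S2])
  moreover have "(\<lambda>j. al q (q * z) j - g j) = al q z"
  proof
    fix j show "al q (q * z) j - g j = al q z j"
      by (cases j) (simp_all add: g_def al_rec[of z])
  qed
  ultimately have "al q z sums (EE q (q * z) - z * EE q (q * z))" by simp
  then show ?thesis unfolding EE_def by (simp add: sums_iff algebra_simps)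
qed

end


context
  fixes q :: complex
  assumes q: "norm q < 1"
begin

lemma norm_qz: "norm z < 1 \<Longrightarrow> norm (q ^ N * z) \<le> norm z"
proof -
  have "norm q ^ N \<le> 1" using q by (simp add: power_le_one)
  then have "norm q ^ N * norm z \<le> 1 * norm z" by (rule mult_right_mono) auto
  then show ?thesis by (simp add: norm_mult norm_power)
qed

lemma EE_iter: "norm z < 1 \<Longrightarrow> EE q z = qpoch z q N * EE q (q ^ N * z)"
proof (induction N arbitrary: z)
  case 0
  then show ?case by simp
next
  case (Suc N)
  have qz: "norm (q * z) < 1" using norm_qz[OF Suc.prems, of 1] Suc.prems by simp
  have "EE q z = (1 - z) * EE q (q * z)" by (rule EE_fun[OF q Suc.prems])
  also have "\<dots> = (1 - z) * (qpoch (q * z) q N * EE q (q ^ N * (q * z)))" by (simp add: Suc.IH[OF qz])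
  also have e_qpoch: "qpoch z q (Suc N) = (1 - z) * qpoch (q * z) q N"
    unfolding qpoch_def by (subst prod.lessThan_Suc_shift) (simp add: algebra_simps)
  have e_arg: "q ^ N * (q * z) = q ^ Suc N * z" by (simp add: algebra_simps)
  have "(1 - z) * (qpoch (q * z) q N * EE q (q ^ N * (q * z))) = qpoch z q (Suc N) * EE q (q ^ Suc N * z)"
    by (simp only: e_arg e_qpoch mult.assoc)
  finally show ?case .
qed

lemma EE_near1:
  assumes w: "norm w < 1"
  shows "norm (EE q w - 1) \<le> KK q * norm w / (1 - norm w)"
proof -
  have sm: "summable (\<lambda>j. norm (al q w j))" by (rule al_norm_summable[OF q w])
  have sm1: "summable (\<lambda>j. norm (al q w (Suc j)))" using summable_Suc_iff[of "\<lambda>j. norm (al q w j)"] sm by simp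
  have "EE q w - 1 = (\<Sum>j. al q w (Suc j))"
    unfolding EE_def using suminf_split_head[OF al_summable[OF q w]] by (simp add: al_0[OF q])
  also have "norm \<dots> \<le> (\<Sum>j. norm (al q w (Suc j)))" by (rule summable_norm[OF sm1])
  also have "\<dots> \<le> (\<Sum>j. KK q * norm w * norm w ^ j)"
  proof (rule suminf_le)
    show "summable (\<lambda>j. KK q * norm w * norm w ^ j)" using w by (intro summable_mult summable_geometric) auto
    fix j show "norm (al q w (Suc j)) \<le> KK q * norm w * norm w ^ j"
      using al_bound[OF q, of w "Suc j"] by (simp add: algebra_simps)
  qed (rule sm1)
  also have "\<dots> = KK q * norm w / (1 - norm w)"
    using w by (simp add: suminf_mult suminf_geometric summable_geometric)
  finally show ?thesis .
qed

lemma EE_lim: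
  assumes z: "norm z < 1"
  shows "(\<lambda>N. EE q (q ^ N * z)) \<longlonglongrightarrow> 1"
proof -
  have lim0: "(\<lambda>N. norm q ^ N * norm z) \<longlonglongrightarrow> 0"
    using q by (auto intro!: tendsto_mult_left_zero LIMSEQ_power_zero)
  have "(\<lambda>N. KK q * (norm q ^ N * norm z) / (1 - norm q ^ N * norm z)) \<longlonglongrightarrow> KK q * 0 / (1 - 0)"
    by (intro tendsto_intros lim0) auto
  then have g0: "(\<lambda>N. KK q * (norm q ^ N * norm z) / (1 - norm q ^ N * norm z)) \<longlonglongrightarrow> 0" by simp
  have "(\<lambda>N. EE q (q ^ N * z) - 1) \<longlonglongrightarrow> 0"
  proof (rule Lim_null_comparison[OF _ g0], rule always_eventually, rule allI)
    fix N
    have "norm (q ^ N * z) < 1" using norm_qz[OF z, of N] z by simp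
    from EE_near1[OF this] show "norm (EE q (q ^ N * z) - 1) \<le> KK q * (norm q ^ N * norm z) / (1 - norm q ^ N * norm z)"
      by (simp add: norm_mult norm_power)
  qed
  then show ?thesis by (simp add: LIM_zero_iff)
qed

theorem euler:
  assumes z: "norm z < 1"
  shows "al q z sums qpoch_inf z q"
proof -
  have lim1: "(\<lambda>N. EE q (q ^ N * z)) \<longlonglongrightarrow> 1" by (rule EE_lim[OF z])
  have ev: "eventually (\<lambda>N. EE q (q ^ N * z) \<noteq> 0) sequentially"
    by (rule tendsto_imp_eventually_ne[OF lim1]) simp
  have "(\<lambda>N. EE q z / EE q (q ^ N * z)) \<longlonglongrightarrow> EE q z / 1"
    by (intro tendsto_intros lim1) simp
  then have "(\<lambda>N. EE q z / EE q (q ^ N * z)) \<longlonglongrightarrow> EE q z" by simp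
  moreover have "eventually (\<lambda>N. EE q z / EE q (q ^ N * z) = qpoch z q N) sequentially"
  proof (rule eventually_mono[OF ev])
    fix N assume "EE q (q ^ N * z) \<noteq> 0"
    then show "EE q z / EE q (q ^ N * z) = qpoch z q N" using EE_iter[OF z, of N] by simp
  qed
  ultimately have P: "(\<lambda>N. qpoch z q N) \<longlonglongrightarrow> EE q z" by (rule Lim_transform_eventually)
  have "summable (\<lambda>j. norm ((1 - z * q ^ j) - 1))"
    using q by (simp add: norm_mult norm_power summable_geometric)
  then have "abs_convergent_prod (\<lambda>j. 1 - z * q ^ j)" by (rule summable_imp_abs_convergent_prod)
  then have "convergent_prod (\<lambda>j. 1 - z * q ^ j)" by (rule abs_convergent_prod_imp_convergent_prod)
  then have "(\<lambda>n. \<Prod>i\<le>n. 1 - z * q ^ i) \<longlonglongrightarrow> qpoch_inf z q"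
    unfolding qpoch_inf_def by (rule convergent_prod_LIMSEQ)
  then have "(\<lambda>n. \<Prod>i<n. 1 - z * q ^ i) \<longlonglongrightarrow> qpoch_inf z q"
    by (simp add: LIMSEQ_lessThan_iff_atMost)
  then have "(\<lambda>N. qpoch z q N) \<longlonglongrightarrow> qpoch_inf z q" by (simp add: qpoch_def)
  with P have "qpoch_inf z q = EE q z" using LIMSEQ_unique by blast
  then show ?thesis unfolding EE_def using summable_sums[OF al_summable[OF q z]] by simp
qed

end


lemma geo_bound:
  fixes f :: "nat \<Rightarrow> complex"
  assumes b: "\<And>n. norm (f n) \<le> K * g ^ n" and g: "0 \<le> g" "g < 1"
  shows "summable (\<lambda>n. norm (f n))" "norm (suminf f) \<le> K / (1 - g)"
proof -
  have sg: "summable (\<lambda>n. K * g ^ n)" using g by (intro summable_mult summable_geometric) auto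
  show sn: "summable (\<lambda>n. norm (f n))"
    by (rule summable_comparison_test'[OF sg, of 0]) (use b in auto)
  have "norm (suminf f) \<le> (\<Sum>n. norm (f n))" by (rule summable_norm[OF sn])
  also have "\<dots> \<le> (\<Sum>n. K * g ^ n)" by (rule suminf_le[OF b sn sg])
  also have "\<dots> = K / (1 - g)" using g by (simp add: suminf_mult suminf_geometric summable_geometric)
  finally show "norm (suminf f) \<le> K / (1 - g)" .
qed

lemma shift_if:
  fixes f :: "nat \<Rightarrow> complex"
  assumes "summable (\<lambda>b. f (b + k))"
  shows "(\<Sum>m. if k \<le> m then f m else 0) = (\<Sum>b. f (b + k))"
proof -
  let ?g = "\<lambda>m. if k \<le> m then f m else 0"
  have A: "(\<lambda>b. ?g (b + k)) sums (\<Sum>b. f (b + k))" using summable_sums[OF assms] by simp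
  have "?g sums ((\<Sum>b. f (b + k)) + (\<Sum>i<k. ?g i))" by (rule sums_iff_shift[of ?g k, THEN iffD1, OF A])
  then show ?thesis by (simp add: sums_iff)
qed

lemma perk:
  fixes F :: "nat \<Rightarrow> nat \<Rightarrow> complex"
  assumes b: "\<And>a b. norm (F (a + k) (b + k)) \<le> K * be ^ a * ga ^ b"
    and be: "0 \<le> be" "be < 1" and ga: "0 \<le> ga" "ga < 1"
  shows "(\<Sum>n. if k \<le> n then (\<Sum>m. if k \<le> m then F n m else 0) else 0) = (\<Sum>a. \<Sum>b. F (a + k) (b + k))"
    and "summable (\<lambda>a. \<Sum>b. F (a + k) (b + k))"
    and "\<And>a. summable (\<lambda>b. F (a + k) (b + k))"
proof -
  have inner: "summable (\<lambda>b. norm (F (a + k) (b + k)))" "norm (\<Sum>b. F (a + k) (b + k)) \<le> (K * be ^ a) / (1 - ga)" for a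
    using geo_bound[of "\<lambda>b. F (a + k) (b + k)" "K * be ^ a" ga] b ga by auto
  show sb: "\<And>a. summable (\<lambda>b. F (a + k) (b + k))" by (rule summable_norm_cancel[OF inner(1)])
  have i2: "norm (\<Sum>b. F (a + k) (b + k)) \<le> K / (1 - ga) * be ^ a" for a
    using inner(2)[of a] by simp
  have outer: "summable (\<lambda>a. norm (\<Sum>b. F (a + k) (b + k)))"
    by (rule geo_bound(1)[of "\<lambda>a. \<Sum>b. F (a + k) (b + k)" "K / (1 - ga)" be, OF i2 be])
  show sa: "summable (\<lambda>a. \<Sum>b. F (a + k) (b + k))" by (rule summable_norm_cancel[OF outer])
  have "(\<Sum>n. if k \<le> n then (\<Sum>m. if k \<le> m then F n m else 0) else 0) = (\<Sum>a. (\<Sum>m. if k \<le> m then F (a + k) m else 0))"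
    by (rule shift_if) (simp add: shift_if[OF sb] sa)
  also have "\<dots> = (\<Sum>a. \<Sum>b. F (a + k) (b + k))" by (simp add: shift_if[OF sb])
  finally show "(\<Sum>n. if k \<le> n then (\<Sum>m. if k \<le> m then F n m else 0) else 0) = (\<Sum>a. \<Sum>b. F (a + k) (b + k))" .
qed

lemma geo_partial: fixes u :: real assumes "0 \<le> u" "u < 1" shows "(\<Sum>i\<in>{..N}. u ^ i) \<le> 1 / (1 - u)"
proof -
  have "(\<Sum>i\<in>{..N}. u ^ i) \<le> (\<Sum>i. u ^ i)" using assms by (intro sum_le_suminf summable_geometric) auto
  also have "\<dots> = 1 / (1 - u)" using assms by (simp add: suminf_geometric)
  finally show ?thesis .
qed

lemma box_summable:
  fixes u v w :: real
  assumes "0 \<le> u" "u < 1" "0 \<le> v" "v < 1" "0 \<le> w" "w < 1"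
  shows "(\<lambda>(k, a, b). u ^ k * v ^ a * w ^ b) summable_on UNIV"
proof (rule nonneg_bdd_above_summable_on)
  show "\<And>x. x \<in> UNIV \<Longrightarrow> 0 \<le> (case x of (k, a, b) \<Rightarrow> u ^ k * v ^ a * w ^ b)" using assms by auto
  show "bdd_above (sum (\<lambda>(k, a, b). u ^ k * v ^ a * w ^ b) ` {F. F \<subseteq> UNIV \<and> finite F})"
  proof (rule bdd_aboveI2)
    fix F :: "(nat \<times> nat \<times> nat) set" assume "F \<in> {F. F \<subseteq> UNIV \<and> finite F}"
    then have fin: "finite F" by simp
    define N where "N = Max ((\<lambda>(k, a, b). k + a + b) ` F)"
    have sub: "F \<subseteq> {..N} \<times> {..N} \<times> {..N}"
    proof
      fix z assume z: "z \<in> F"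
      obtain k a b where zz: "z = (k, a, b)" by (cases z) auto
      have "(\<lambda>(k, a, b). k + a + b) z \<in> (\<lambda>(k, a, b). k + a + b) ` F" using z by blast
      then have "(\<lambda>(k, a, b). k + a + b) z \<le> N" unfolding N_def using fin by (intro Max_ge) auto
      then have "k + a + b \<le> N" using zz by simp
      then show "z \<in> {..N} \<times> {..N} \<times> {..N}" using zz by auto
    qed
    have "(\<Sum>z\<in>F. (\<lambda>(k, a, b). u ^ k * v ^ a * w ^ b) z) \<le> (\<Sum>z\<in>{..N} \<times> {..N} \<times> {..N}. (\<lambda>(k, a, b). u ^ k * v ^ a * w ^ b) z)"
      by (rule sum_mono2[OF _ sub]) (use assms in auto)
    also have "\<dots> = (\<Sum>k\<le>N. \<Sum>a\<le>N. \<Sum>b\<le>N. u ^ k * v ^ a * w ^ b)"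
      by (simp add: sum.cartesian_product)
    also have "\<dots> = (\<Sum>k\<le>N. u ^ k * (\<Sum>a\<le>N. v ^ a * (\<Sum>b\<le>N. w ^ b)))"
      by (simp only: sum_distrib_left mult.assoc)
    also have "\<dots> = (\<Sum>k\<le>N. u ^ k) * ((\<Sum>a\<le>N. v ^ a) * (\<Sum>b\<le>N. w ^ b))"
      by (simp only: sum_distrib_right)
    also have "\<dots> \<le> (1 / (1 - u)) * ((1 / (1 - v)) * (1 / (1 - w)))"
    proof -
      have g1: "(\<Sum>k\<le>N. u ^ k) \<le> 1 / (1 - u)" by (rule geo_partial) (use assms in auto)
      have g2: "(\<Sum>k\<le>N. v ^ k) \<le> 1 / (1 - v)" by (rule geo_partial) (use assms in auto)
      have g3: "(\<Sum>k\<le>N. w ^ k) \<le> 1 / (1 - w)" by (rule geo_partial) (use assms in auto)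
      have n2: "0 \<le> (\<Sum>k\<le>N. v ^ k)" "0 \<le> (\<Sum>k\<le>N. w ^ k)" "0 \<le> (\<Sum>k\<le>N. u ^ k)"
        using assms by (simp_all add: sum_nonneg)
      have n3: "0 \<le> 1 / (1 - v)" "0 \<le> 1 / (1 - u)" using assms by simp_all
      have "(\<Sum>a\<le>N. v ^ a) * (\<Sum>b\<le>N. w ^ b) \<le> (1 / (1 - v)) * (1 / (1 - w))"
        by (rule mult_mono[OF g2 g3 n3(1) n2(2)])
      moreover have "0 \<le> (\<Sum>a\<le>N. v ^ a) * (\<Sum>b\<le>N. w ^ b)" using n2 by simp
      ultimately show ?thesis by (rule mult_mono[OF g1 _ n3(2)])
    qed
    finally show "(\<Sum>z\<in>F. (\<lambda>(k, a, b). u ^ k * v ^ a * w ^ b) z) \<le> (1 / (1 - u)) * ((1 / (1 - v)) * (1 / (1 - w)))" .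
  qed
qed

lemma nat_infsum_suminf:
  fixes f :: "nat \<Rightarrow> complex"
  assumes "f summable_on UNIV"
  shows "infsum f UNIV = suminf f"
  using has_sum_imp_sums[OF has_sum_infsum[OF assms]] by (simp add: sums_iff)

lemma triple_iter:
  fixes f :: "nat \<Rightarrow> nat \<Rightarrow> nat \<Rightarrow> complex"
  assumes S: "(\<lambda>(k, a, b). f k a b) summable_on UNIV"
  shows "(\<Sum>k. \<Sum>a. \<Sum>b. f k a b) = infsum (\<lambda>(k, a, b). f k a b) UNIV"
proof -
  have S': "(\<lambda>(k, ab). (\<lambda>(a, b). f k a b) ab) summable_on Sigma UNIV (\<lambda>_. UNIV)"
    using S by (simp add: case_prod_unfold)
  have Sk: "(\<lambda>(a, b). f k a b) summable_on UNIV" for k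
    using summable_on_SigmaD1[OF S', of k] by simp
  have Sk': "(\<lambda>(a, b). f k a b) summable_on Sigma UNIV (\<lambda>_. UNIV)" for k using Sk[of k] by simp
  have Ska: "(\<lambda>b. f k a b) summable_on UNIV" for k a
    using summable_on_SigmaD1[OF Sk', of a] by simp
  have I1: "infsum (\<lambda>(k, a, b). f k a b) UNIV = infsum (\<lambda>k. infsum (\<lambda>(a, b). f k a b) UNIV) UNIV"
    using infsum_Sigma'_banach[OF S'] by simp
  have I2: "infsum (\<lambda>(a, b). f k a b) UNIV = infsum (\<lambda>a. infsum (\<lambda>b. f k a b) UNIV) UNIV" for k
    using infsum_Sigma'_banach[OF Sk'[of k]] by simp
  have Sa: "(\<lambda>a. infsum (\<lambda>b. f k a b) UNIV) summable_on UNIV" for k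
    using summable_on_Sigma_banach[OF Sk'[of k]] by simp
  have Sk2: "(\<lambda>k. infsum (\<lambda>(a, b). f k a b) UNIV) summable_on UNIV"
    using summable_on_Sigma_banach[OF S'] by simp
  have "infsum (\<lambda>(k, a, b). f k a b) UNIV = (\<Sum>k. infsum (\<lambda>(a, b). f k a b) UNIV)"
    unfolding I1 by (rule nat_infsum_suminf[OF Sk2])
  also have "\<dots> = (\<Sum>k. \<Sum>a. infsum (\<lambda>b. f k a b) UNIV)"
    unfolding I2 nat_infsum_suminf[OF Sa] ..
  also have "\<dots> = (\<Sum>k. \<Sum>a. \<Sum>b. f k a b)"
    unfolding nat_infsum_suminf[OF Ska] ..
  finally show ?thesis by simp
qed


lemma reindex_tri:
  fixes g :: "nat \<Rightarrow> nat \<Rightarrow> nat \<Rightarrow> complex"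
  assumes S: "(\<lambda>(k, a, b). g k (a + k) (b + k)) summable_on UNIV"
  shows "infsum (\<lambda>(k, a, b). g k (a + k) (b + k)) UNIV = infsum (\<lambda>(n, m). \<Sum>k\<le>min n m. g k n m) UNIV"
proof -
  define T where "T = Sigma (UNIV :: (nat \<times> nat) set) (\<lambda>(n, m). {..min n m})"
  define h where "h = (\<lambda>((n, m), k). g k n m)"
  define i where "i = (\<lambda>((n::nat, m::nat), k::nat). (k, n - k, m - k))"
  define j where "j = (\<lambda>(k::nat, a::nat, b::nat). ((a + k, b + k), k))"
  have w1: "\<And>x. x \<in> UNIV \<Longrightarrow> i (j x) = x" by (auto simp: i_def j_def)
  have w2: "\<And>x. x \<in> UNIV \<Longrightarrow> j x \<in> T" by (auto simp: j_def T_def)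
  have w3: "\<And>y. y \<in> T \<Longrightarrow> j (i y) = y" by (auto simp: i_def j_def T_def)
  have w4: "\<And>y. y \<in> T \<Longrightarrow> i y \<in> UNIV" by simp
  have w5: "\<And>x. x \<in> UNIV \<Longrightarrow> h (j x) = (\<lambda>(k, a, b). g k (a + k) (b + k)) x" by (auto simp: h_def j_def)
  have e1: "infsum (\<lambda>(k, a, b). g k (a + k) (b + k)) UNIV = infsum h T"
    by (rule infsum_reindex_bij_witness[of UNIV i j T h "\<lambda>(k, a, b). g k (a + k) (b + k)", OF w1 w2 w3 w4 w5])
  have "h summable_on T"
    using summable_on_reindex_bij_witness[of UNIV i j T h "\<lambda>(k, a, b). g k (a + k) (b + k)", OF w1 w2 w3 w4 w5] S by simp
  then have hs: "(\<lambda>(x, y). h (x, y)) summable_on Sigma UNIV (\<lambda>(n, m). {..min n m})"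
    by (simp add: T_def)
  have "infsum h T = infsum (\<lambda>x. infsum (\<lambda>y. h (x, y)) ((\<lambda>(n, m). {..min n m}) x)) UNIV"
    using infsum_Sigma'_banach[OF hs] by (simp add: T_def)
  also have "\<dots> = infsum (\<lambda>(n, m). \<Sum>k\<le>min n m. g k n m) UNIV"
    by (rule infsum_cong) (auto simp: h_def)
  finally show ?thesis using e1 by simp
qed

lemma GL:
  fixes F :: "nat \<Rightarrow> nat \<Rightarrow> nat \<Rightarrow> complex" and c :: "nat \<Rightarrow> complex"
  assumes bF: "\<And>k a b. norm (F k (a + k) (b + k)) \<le> C * de ^ k * be ^ a * ga ^ b"
    and bc: "\<And>k. norm (c k) \<le> D * alp ^ k"
    and nn: "0 \<le> alp" "0 \<le> be" "0 \<le> ga" "0 \<le> de"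
    and lt: "alp * de < 1" "be < 1" "ga < 1"
  shows "(\<Sum>k. c k * (\<Sum>n. if k \<le> n then (\<Sum>m. if k \<le> m then F k n m else 0) else 0))
       = infsum (\<lambda>(n, m). \<Sum>k\<le>min n m. c k * F k n m) UNIV"
proof -
  have "norm (F 0 0 0) \<le> C" using bF[of 0 0 0] by simp
  then have C0: "0 \<le> C" by (meson norm_ge_zero order_trans)
  have "norm (c 0) \<le> D" using bc[of 0] by simp
  then have D0: "0 \<le> D" by (meson norm_ge_zero order_trans)
  have bF': "norm (F k (a + k) (b + k)) \<le> C * de ^ k * be ^ a * ga ^ b" for k a b using bF .
  have pk: "(\<Sum>n. if k \<le> n then (\<Sum>m. if k \<le> m then F k n m else 0) else 0) = (\<Sum>a. \<Sum>b. F k (a + k) (b + k))"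
    "summable (\<lambda>a. \<Sum>b. F k (a + k) (b + k))" "\<And>a. summable (\<lambda>b. F k (a + k) (b + k))" for k
    using perk[of "F k" k "C * de ^ k" be ga] bF nn lt by auto
  have step: "c k * (\<Sum>n. if k \<le> n then (\<Sum>m. if k \<le> m then F k n m else 0) else 0)
      = (\<Sum>a. \<Sum>b. c k * F k (a + k) (b + k))" for k
  proof -
    have "c k * (\<Sum>a. \<Sum>b. F k (a + k) (b + k)) = (\<Sum>a. c k * (\<Sum>b. F k (a + k) (b + k)))"
      by (rule suminf_mult[OF pk(2), symmetric])
    also have "\<dots> = (\<Sum>a. \<Sum>b. c k * F k (a + k) (b + k))"
      by (simp add: suminf_mult[OF pk(3)])
    finally show ?thesis by (simp add: pk(1))
  qed
  define W where "W = (\<lambda>(k, a, b). c k * F k (a + k) (b + k))"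
  define G where "G = (\<lambda>(k::nat, a::nat, b::nat). (D * C) * ((alp * de) ^ k * be ^ a * ga ^ b))"
  have Gs: "G summable_on UNIV"
    unfolding G_def using box_summable[of "alp * de" be ga] nn lt
    by (simp add: case_prod_unfold summable_on_cmult_right)
  have "(\<lambda>x. norm (W x)) summable_on UNIV"
  proof (rule Infinite_Sum.abs_summable_on_comparison_test)
    show "(\<lambda>x. norm (G x)) summable_on UNIV"
    proof -
      have "(\<lambda>x. norm (G x)) = G" using nn C0 D0 by (auto simp: G_def fun_eq_iff)
      then show ?thesis using Gs by simp
    qed
    fix x :: "nat \<times> nat \<times> nat"
    obtain k a b where x: "x = (k, a, b)" by (cases x) auto
    have "norm (c k * F k (a + k) (b + k)) \<le> (D * alp ^ k) * (C * de ^ k * be ^ a * ga ^ b)"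
      unfolding norm_mult by (rule mult_mono[OF bc bF]) (use D0 nn in auto)
    also have "\<dots> = (D * C) * ((alp * de) ^ k * be ^ a * ga ^ b)" by (simp add: power_mult_distrib ac_simps)
    also have "\<dots> \<le> norm ((D * C) * ((alp * de) ^ k * be ^ a * ga ^ b))" by simp
    finally show "norm (W x) \<le> norm (G x)" by (simp add: x W_def G_def)
  qed
  then have Ws: "W summable_on UNIV" by (rule abs_summable_summable)
  have "(\<Sum>k. c k * (\<Sum>n. if k \<le> n then (\<Sum>m. if k \<le> m then F k n m else 0) else 0))
      = (\<Sum>k. \<Sum>a. \<Sum>b. c k * F k (a + k) (b + k))" by (simp add: step)
  also have "\<dots> = infsum W UNIV"
    unfolding W_def by (rule triple_iter) (use Ws in \<open>simp add: W_def\<close>)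
  also have "\<dots> = infsum (\<lambda>(n, m). \<Sum>k\<le>min n m. c k * F k n m) UNIV"
    unfolding W_def by (rule reindex_tri[of "\<lambda>k n m. c k * F k n m"]) (use Ws in \<open>simp add: W_def\<close>)
  finally show ?thesis .
qed


context
  fixes q :: complex
  assumes q: "norm q < 1"
begin

definition QB :: real where "QB = exp (norm q / (1 - norm q)) * KK q ^ 2"

lemma qp_upper: "norm (qpoch q q n) \<le> exp (norm q / (1 - norm q))"
proof -
  let ?r = "norm q"
  have r0: "0 \<le> ?r" "?r < 1" using q by auto
  have "norm (qpoch q q n) = (\<Prod>j<n. norm (1 - q * q ^ j))"
    by (simp add: qpoch_def prod_norm)
  also have "\<dots> \<le> (\<Prod>j<n. exp (?r ^ Suc j))"
  proof (rule prod_mono, safe)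
    fix j
    show "0 \<le> norm (1 - q * q ^ j)" by simp
    have "norm (1 - q * q ^ j) \<le> 1 + ?r ^ Suc j"
      using norm_triangle_ineq4[of 1 "q * q ^ j"] by (simp add: norm_mult norm_power)
    also have "\<dots> \<le> exp (?r ^ Suc j)" using exp_ge_add_one_self[of "?r ^ Suc j"] by simp
    finally show "norm (1 - q * q ^ j) \<le> exp (?r ^ Suc j)" .
  qed
  also have "\<dots> = exp (\<Sum>j<n. ?r ^ Suc j)" by (simp add: exp_sum)
  also have "(\<Sum>j<n. ?r ^ Suc j) \<le> ?r / (1 - ?r)"
  proof -
    have "(\<Sum>j<n. ?r ^ Suc j) = ?r * (\<Sum>j<n. ?r ^ j)" by (simp add: sum_distrib_left)
    also have "(\<Sum>j<n. ?r ^ j) \<le> (\<Sum>j. ?r ^ j)"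
      using r0 by (intro sum_le_suminf summable_geometric) auto
    also have "(\<Sum>j. ?r ^ j) = 1 / (1 - ?r)" using r0 by (simp add: suminf_geometric)
    finally show ?thesis using r0 by (simp add: mult_left_mono)
  qed
  then have "exp (\<Sum>j<n. ?r ^ Suc j) \<le> exp (?r / (1 - ?r))" by simp
  finally show ?thesis .
qed

lemma qbinom_bound: "norm (qbinom q n k) \<le> QB"
proof -
  have "norm (qbinom q n k) = norm (qpoch q q n) * norm (1 / qpoch q q k) * norm (1 / qpoch q q (n - k))"
    by (simp add: qbinom_def norm_mult norm_divide)
  also have "\<dots> \<le> exp (norm q / (1 - norm q)) * KK q * KK q"
    using KK_pos[OF q] by (intro mult_mono qp_upper inv_qp_bound[OF q]) (auto intro: mult_nonneg_nonneg)
  finally show ?thesis by (simp add: QB_def power2_eq_square mult.assoc)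
qed

lemma QB_nonneg: "0 \<le> QB" by (simp add: QB_def)

lemma Pq_bound: "norm (Pq q k x y) \<le> (norm x + norm y) ^ k"
proof -
  have "norm (Pq q k x y) = (\<Prod>j<k. norm (x - q ^ j * y))" by (simp add: Pq_def prod_norm)
  also have "\<dots> \<le> (\<Prod>j<k. norm x + norm y)"
  proof (rule prod_mono, safe)
    fix j
    show "0 \<le> norm (x - q ^ j * y)" by simp
    have "norm (q ^ j) \<le> 1" using q by (simp add: norm_power power_le_one)
    then have "norm (q ^ j * y) \<le> norm y" by (simp add: norm_mult mult_left_le_one_le)
    then show "norm (x - q ^ j * y) \<le> norm x + norm y"
      using norm_triangle_ineq4[of x "q ^ j * y"] by simp
  qed
  finally show ?thesis by simp
qed

lemma hq_bound: "norm (hq q N x y) \<le> QB * (1 + norm x + norm y) ^ N"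
proof -
  let ?a = "norm x + norm y"
  have "norm (hq q N x y) \<le> (\<Sum>k\<le>N. norm (qbinom q N k * Pq q k x y))"
    unfolding hq_def by (rule norm_sum)
  also have "\<dots> \<le> (\<Sum>k\<le>N. QB * (real (N choose k) * ?a ^ k * 1 ^ (N - k)))"
  proof (rule sum_mono)
    fix k assume k: "k \<in> {..N}"
    have kN: "k \<le> N" using k by simp
    have "0 < N choose k" by (rule zero_less_binomial[OF kN])
    then have "1 \<le> real (N choose k)" by (metis One_nat_def Suc_leI of_nat_1 of_nat_le_iff)
    then have "1 * ?a ^ k \<le> real (N choose k) * ?a ^ k" by (rule mult_right_mono) simp
    then have "?a ^ k \<le> real (N choose k) * ?a ^ k" by simp
    then have "norm (Pq q k x y) \<le> real (N choose k) * ?a ^ k * 1 ^ (N - k)"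
      using Pq_bound[of k x y] by simp
    then show "norm (qbinom q N k * Pq q k x y) \<le> QB * (real (N choose k) * ?a ^ k * 1 ^ (N - k))"
      unfolding norm_mult by (intro mult_mono qbinom_bound QB_nonneg) auto
  qed
  also have "\<dots> = QB * (?a + 1) ^ N" by (simp add: binomial_ring sum_distrib_left)
  finally show ?thesis by (simp add: add.commute add.left_commute)
qed

end


theorem theorem3p3:
  fixes q x y t s :: complex
  assumes "norm q < 1"
    and "norm t * (1 + norm x + norm y) < 1"
    and "norm s * (1 + norm x + norm y) < 1"
  shows "(\<Sum>k. ((-1) ^ k * y ^ k * q ^ (k choose 2) / qpoch q q k) *
            (\<Sum>n. if k \<le> n then
               (\<Sum>m. if k \<le> m then
                  hq q (n + m - k) x y * (t ^ n / qpoch q q (n - k)) * (s ^ m / qpoch q q (m - k))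
                else 0)
             else 0))
       = qpoch_inf (x * s * t) q *
         (\<Sum>n. \<Sum>m. hq q n x y * hq q m x y * (t ^ n / qpoch q q n) * (s ^ m / qpoch q q m))"
proof -
  note q = assms(1)
  define M where "M = 1 + norm x + norm y"
  have M1: "1 \<le> M" and xM: "norm x \<le> M" and yM: "norm y \<le> M" unfolding M_def by auto
  have tM: "norm t * M < 1" and sM: "norm s * M < 1" using assms(2,3) by (simp_all add: M_def)
  have t1: "norm t < 1"
  proof -
    have "norm t * 1 \<le> norm t * M" by (rule mult_left_mono[OF M1]) simp
    then show ?thesis using tM by simp
  qed
  have s1: "norm s < 1"
  proof -
    have "norm s * 1 \<le> norm s * M" by (rule mult_left_mono[OF M1]) simp
    then show ?thesis using sM by simp
  qed
  have ys: "norm y * norm s < 1"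
  proof -
    have "norm y * norm s \<le> M * norm s" by (rule mult_right_mono[OF yM]) simp
    then show ?thesis using sM by (simp add: mult.commute)
  qed
  have xs: "norm x * norm s < 1"
  proof -
    have "norm x * norm s \<le> M * norm s" by (rule mult_right_mono[OF xM]) simp
    then show ?thesis using sM by (simp add: mult.commute)
  qed
  have M0: "0 \<le> M" using M1 by simp
  have KK0: "0 \<le> KK q" using KK_pos[OF q] by simp
  have QB0: "0 \<le> QB q" using QB_nonneg[OF q] .
  define FL where "FL k n m = hq q (n + m - k) x y * (t ^ n / qpoch q q (n - k)) * (s ^ m / qpoch q q (m - k))" for k n m
  define GR where "GR k n m = hq q (n - k) x y * hq q (m - k) x y * (t ^ n / qpoch q q (n - k)) * (s ^ m / qpoch q q (m - k))" for k n m
  define AA where "AA a b = hq q a x y * hq q b x y * (t ^ a / qpoch q q a) * (s ^ b / qpoch q q b)" for a b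
  have fr: "norm (z ^ n / qpoch q q j) \<le> norm z ^ n * KK q" for z :: complex and n j
  proof -
    have "norm (z ^ n / qpoch q q j) = norm z ^ n * norm (1 / qpoch q q j)" by (simp add: norm_divide norm_power)
    also have "\<dots> \<le> norm z ^ n * KK q" by (rule mult_left_mono[OF inv_qp_bound[OF q]]) simp
    finally show ?thesis .
  qed
  have bFL: "norm (FL k (a + k) (b + k)) \<le> (QB q * KK q ^ 2) * (M * norm t * norm s) ^ k * (M * norm t) ^ a * (M * norm s) ^ b" for k a b
  proof -
    have idx: "a + k + (b + k) - k = a + b + k" "a + k - k = a" "b + k - k = b" by auto
    have "norm (FL k (a + k) (b + k)) = norm (hq q (a + b + k) x y) * norm (t ^ (a + k) / qpoch q q a) * norm (s ^ (b + k) / qpoch q q b)"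
      unfolding FL_def idx by (simp only: norm_mult)
    also have "\<dots> \<le> (QB q * M ^ (a + b + k)) * (norm t ^ (a + k) * KK q) * (norm s ^ (b + k) * KK q)"
      using hq_bound[OF q, of "a + b + k" x y] unfolding M_def[symmetric]
      by (intro mult_mono fr) (auto simp: QB0 KK0 M0 intro!: mult_nonneg_nonneg)
    also have "\<dots> = (QB q * KK q ^ 2) * (M * norm t * norm s) ^ k * (M * norm t) ^ a * (M * norm s) ^ b"
      by (simp add: power_add power_mult_distrib power2_eq_square ac_simps)
    finally show ?thesis .
  qed
  have ltL: "norm y * (M * norm t * norm s) < 1"
  proof -
    have "norm y * (M * norm t * norm s) = (norm t * M) * (norm y * norm s)" by (simp add: ac_simps)
    also have "\<dots> \<le> (norm t * M) * 1" using ys M0 by (intro mult_left_mono) auto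
    finally show ?thesis using tM by simp
  qed
  have L: "(\<Sum>k. al q y k * (\<Sum>n. if k \<le> n then (\<Sum>m. if k \<le> m then FL k n m else 0) else 0))
      = infsum (\<lambda>(n, m). \<Sum>k\<le>min n m. al q y k * FL k n m) UNIV"
    by (rule GL[OF bFL al_bound[OF q]]) (use ltL tM sM M0 in \<open>auto simp: mult.commute\<close>)
  have bGR: "norm (GR k (a + k) (b + k)) \<le> (QB q ^ 2 * KK q ^ 2) * (norm t * norm s) ^ k * (M * norm t) ^ a * (M * norm s) ^ b" for k a b
  proof -
    have idx: "a + k - k = a" "b + k - k = b" by auto
    have "norm (GR k (a + k) (b + k)) = norm (hq q a x y) * norm (hq q b x y) * norm (t ^ (a + k) / qpoch q q a) * norm (s ^ (b + k) / qpoch q q b)"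
      unfolding GR_def idx by (simp only: norm_mult)
    also have "\<dots> \<le> (QB q * M ^ a) * (QB q * M ^ b) * (norm t ^ (a + k) * KK q) * (norm s ^ (b + k) * KK q)"
      using hq_bound[OF q, of a x y] hq_bound[OF q, of b x y] unfolding M_def[symmetric]
      by (intro mult_mono fr) (auto simp: QB0 KK0 M0 intro!: mult_nonneg_nonneg)
    also have "\<dots> = (QB q ^ 2 * KK q ^ 2) * (norm t * norm s) ^ k * (M * norm t) ^ a * (M * norm s) ^ b"
      by (simp add: power_add power_mult_distrib power2_eq_square ac_simps)
    finally show ?thesis .
  qed
  have ltR: "norm x * (norm t * norm s) < 1"
  proof -
    have "norm x * (norm t * norm s) = norm t * (norm x * norm s)" by (simp add: ac_simps)
    also have "\<dots> \<le> 1 * (norm x * norm s)" using t1 by (intro mult_right_mono) auto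
    finally show ?thesis using xs by simp
  qed
  have R: "(\<Sum>k. al q x k * (\<Sum>n. if k \<le> n then (\<Sum>m. if k \<le> m then GR k n m else 0) else 0))
      = infsum (\<lambda>(n, m). \<Sum>k\<le>min n m. al q x k * GR k n m) UNIV"
    by (rule GL[OF bGR al_bound[OF q]]) (use ltR tM sM M0 in \<open>auto simp: mult.commute\<close>)
  have pR: "(\<Sum>n. if k \<le> n then (\<Sum>m. if k \<le> m then GR k n m else 0) else 0) = (\<Sum>a. \<Sum>b. GR k (a + k) (b + k))"
    "summable (\<lambda>a. \<Sum>b. GR k (a + k) (b + k))" "\<And>a. summable (\<lambda>b. GR k (a + k) (b + k))" for k
    using perk[of "GR k" k "(QB q ^ 2 * KK q ^ 2) * (norm t * norm s) ^ k" "M * norm t" "M * norm s"] bGR tM sM M0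
    by (auto simp: mult.commute)
  have GRAA: "GR k (a + k) (b + k) = (s * t) ^ k * AA a b" for k a b
    by (simp add: GR_def AA_def power_add power_mult_distrib)
  have GR0: "GR 0 a b = AA a b" for a b by (simp add: GR_def AA_def)
  have AAs1: "summable (\<lambda>b. AA a b)" for a using pR(3)[of 0 a] by (simp add: GR0)
  have AAs2: "summable (\<lambda>a. \<Sum>b. AA a b)" using pR(2)[of 0] by (simp add: GR0)
  have Tk: "(s * t) ^ k * (\<Sum>n. \<Sum>m. AA n m) = (\<Sum>n. if k \<le> n then (\<Sum>m. if k \<le> m then GR k n m else 0) else 0)" for k
  proof -
    have "(s * t) ^ k * (\<Sum>n. \<Sum>m. AA n m) = (\<Sum>a. (s * t) ^ k * (\<Sum>b. AA a b))"
      by (rule suminf_mult[OF AAs2, symmetric])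
    also have "\<dots> = (\<Sum>a. \<Sum>b. (s * t) ^ k * AA a b)" by (simp add: suminf_mult[OF AAs1])
    also have "\<dots> = (\<Sum>a. \<Sum>b. GR k (a + k) (b + k))" by (simp add: GRAA)
    finally show ?thesis by (simp add: pR(1))
  qed
  have xst: "norm (x * s * t) < 1"
  proof -
    have "norm (x * s * t) = (norm x * norm s) * norm t" by (simp add: norm_mult)
    also have "\<dots> \<le> 1 * norm t" using xs by (intro mult_right_mono) auto
    finally show ?thesis using t1 by simp
  qed
  have eul: "(\<lambda>j. al q x j * (s * t) ^ j) sums qpoch_inf (x * s * t) q"
  proof -
    have e: "al q (x * s * t) = (\<lambda>j. al q x j * (s * t) ^ j)"
      by (rule ext) (simp add: al_def power_mult_distrib field_simps)
    show ?thesis using euler[OF q xst] by (simp only: e)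
  qed
  have "qpoch_inf (x * s * t) q * (\<Sum>n. \<Sum>m. AA n m) = (\<Sum>j. al q x j * (s * t) ^ j * (\<Sum>n. \<Sum>m. AA n m))"
  proof -
    have sm: "summable (\<lambda>j. al q x j * (s * t) ^ j)" and ev: "(\<Sum>j. al q x j * (s * t) ^ j) = qpoch_inf (x * s * t) q"
      using eul by (auto simp: sums_iff)
    show ?thesis unfolding ev[symmetric] by (rule suminf_mult2[OF sm])
  qed
  also have "\<dots> = (\<Sum>j. al q x j * (\<Sum>n. if j \<le> n then (\<Sum>m. if j \<le> m then GR j n m else 0) else 0))"
    by (simp add: Tk[symmetric] mult.assoc)
  finally have R2: "qpoch_inf (x * s * t) q * (\<Sum>n. \<Sum>m. AA n m) = infsum (\<lambda>(n, m). \<Sum>k\<le>min n m. al q x k * GR k n m) UNIV"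
    using R by simp
  have mid: "infsum (\<lambda>(n, m). \<Sum>k\<le>min n m. al q y k * FL k n m) UNIV = infsum (\<lambda>(n, m). \<Sum>k\<le>min n m. al q x k * GR k n m) UNIV"
  proof (rule infsum_cong)
    fix nm :: "nat \<times> nat"
    obtain n m where nm: "nm = (n, m)" by (cases nm) auto
    have "(\<Sum>k\<le>min n m. al q y k * FL k n m) = t ^ n * s ^ m *
        (\<Sum>k\<le>min n m. al q y k * (hq q (n + m - k) x y / (qpoch q q (n - k) * qpoch q q (m - k))))"
      unfolding sum_distrib_left FL_def by (rule sum.cong) (simp_all add: qpoch_nz[OF q] field_simps)
    also have "\<dots> = t ^ n * s ^ m *
        (\<Sum>k\<le>min n m. al q x k * (hq q (n - k) x y * hq q (m - k) x y / (qpoch q q (n - k) * qpoch q q (m - k))))"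
      unfolding fin_id[OF q] ..
    also have "\<dots> = (\<Sum>k\<le>min n m. al q x k * GR k n m)"
      unfolding sum_distrib_left GR_def by (rule sum.cong) (simp_all add: qpoch_nz[OF q] field_simps)
    finally show "(\<lambda>(n, m). \<Sum>k\<le>min n m. al q y k * FL k n m) nm = (\<lambda>(n, m). \<Sum>k\<le>min n m. al q x k * GR k n m) nm"
      by (simp add: nm)
  qed
  show ?thesis
    using L mid R2 unfolding al_def FL_def AA_def by simp
qed


end
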